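(* There is no Lie algebra homomorphism $s:L_1\to\Lambda_1(\mathbb{Q}\mathrm{Par})^+$ with $\varepsilon_2\circ s=\mathrm{id}_{L_1}$ such that $s$ maps $\mathbb{Q}x^m\frac{d}{dx}$ into $\mathbb{Q}\mathrm{Par}((m))$ for each $m\ge2$. In other words, the augmentation homomorphism $\varepsilon_2:\Lambda_1(\mathbb{Q}\mathrm{Par})^+\to L_1$ has no such splitting.
   Context: The nonsymmetric operad of partitions $\mathrm{Par}$: $\mathrm{Par}((1))=\{1\}$, and for $m\ge2$, $\mathrm{Par}((m))$ is the set of monomials $\prod_{i=1}^Nx_i^{a_i}$ with $N\ge2$, all $a_i\ge1$, $\sum a_i=m$. Partial composition: if $a_1+\dots+a_{l-1}+1\le s\le a_1+\dots+a_l$, then $\left(\prod_{i=1}^Nx_i^{a_i}\right)\circ_s\left(\prod_{k=1}^{N_s}x_k^{b_k}\right)=x_l^{a_l-1+\sum_kb_k}\prod_{i\ne l}x_i^{a_i}$; $1$ is a two-sided unit. $\Lambda_1(\mathbb{Q}\mathrm{Par})=\bigoplus_{m\ge2}\mathbb{Q}\mathrm{Par}((m))$ with Lie bracket $[c,d]=\sum_{t=1}^{j}d\circ_tc-\sum_{s=1}^{k}c\circ_sd$ for $c\in\mathrm{Par}((k))$, $d\in\mathrm{Par}((j))$. The involution $\iota$ of $\Lambda_1(\mathbb{Q}\mathrm{Par})$ is the linear map with $\iota(x_1^{a_1}x_2^{a_2}\cdots x_n^{a_n})=x_1^{a_n}x_2^{a_{n-1}}\cdots x_n^{a_1}$; it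 is a Lie algebra automorphism, and $\Lambda_1(\mathbb{Q}\mathrm{Par})^+=\{u:\iota(u)=u\}$ is a Lie subalgebra. $L_1=x^2\mathbb{Q}[x]\frac{d}{dx}$, and $\varepsilon_2$ is the restriction to $\Lambda_1(\mathbb{Q}\mathrm{Par})^+$ of the augmentation homomorphism, which sends every monomial in $\mathrm{Par}((m))$ to $x^m\frac{d}{dx}$. *)

theory Defs
  imports "HOL-Computational_Algebra.Polynomial"
begin

text \<open>Monomials x_1^{a_1}...x_N^{a_N} of Par((m)), m >= 2, are encoded as the lists
  [a_1,...,a_N] with N >= 2, all a_i >= 1, and sum = m.\<close>

definition ParAll :: "nat list set" where
  "ParAll = {c. 2 \<le> length c \<and> 0 \<notin> set c}"

definition Par :: "nat \<Rightarrow> nat list set" where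
  "Par m = {c \<in> ParAll. sum_list c = m}"

text \<open>Partial composition c o_s d (positions s = 1 .. sum c), for c, d of length >= 2.
  l is the (0-based) index with a_1+...+a_{l} < s <= a_1+...+a_{l+1}.\<close>

definition pcomp :: "nat list \<Rightarrow> nat \<Rightarrow> nat list \<Rightarrow> nat list" where
  "pcomp c s d =
     (let l = (LEAST i. s \<le> sum_list (take (Suc i) c))
      in c[l := c ! l - 1 + sum_list d])"

text \<open>Coefficient of the monomial e in the bracket [c,d] = sum_t d o_t c - sum_s c o_s d.\<close>

definition elem_bracket :: "nat list \<Rightarrow> nat list \<Rightarrow> nat list \<Rightarrow> rat" where
  "elem_bracket c d e =
     of_nat (card {t \<in> {1..sum_list d}. pcomp d t c = e})
   - of_nat (card {s \<in> {1..sum_list c}. pcomp c s d = e})"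

text \<open>Elements of Lambda_1(QPar): finitely supported rational functions on ParAll.\<close>

definition Lambda1 :: "(nat list \<Rightarrow> rat) set" where
  "Lambda1 = {u. finite {c. u c \<noteq> 0} \<and> {c. u c \<noteq> 0} \<subseteq> ParAll}"

definition lie_br :: "(nat list \<Rightarrow> rat) \<Rightarrow> (nat list \<Rightarrow> rat) \<Rightarrow> (nat list \<Rightarrow> rat)" where
  "lie_br u v = (\<lambda>e. \<Sum>c\<in>{c. u c \<noteq> 0}. \<Sum>d\<in>{d. v d \<noteq> 0}. u c * v d * elem_bracket c d e)"

definition iota :: "(nat list \<Rightarrow> rat) \<Rightarrow> (nat list \<Rightarrow> rat)" where
  "iota u = (\<lambda>c. u (rev c))"

definition Lambda1_plus :: "(nat list \<Rightarrow> rat) set" where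
  "Lambda1_plus = {u \<in> Lambda1. iota u = u}"

text \<open>L_1 = x^2 Q[x] d/dx; the vector field f(x) d/dx is encoded by the polynomial f.\<close>

definition L1 :: "rat poly set" where
  "L1 = {f. coeff f 0 = 0 \<and> coeff f 1 = 0}"

definition L1_br :: "rat poly \<Rightarrow> rat poly \<Rightarrow> rat poly" where
  "L1_br f g = f * pderiv g - g * pderiv f"

definition eps2 :: "(nat list \<Rightarrow> rat) \<Rightarrow> rat poly" where
  "eps2 u = (\<Sum>c\<in>{c. u c \<noteq> 0}. monom (u c) (sum_list c))"

end

theory Submission imports Defs begin

lemma pcomp_Cons:
  assumes "s \<le> sum_list (a # c)"
  shows "pcomp (a # c) s d = (if s \<le> a then (a - 1 + sum_list d) # c else a # pcomp c (s - a) d)"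
proof (cases "s \<le> a")
  case True
  then show ?thesis by (simp add: pcomp_def)
next
  case False
  let ?P = "\<lambda>i. s \<le> sum_list (take (Suc i) (a # c))"
  have "?P (length c)" using assms by simp
  moreover have "\<not> ?P 0" using False by simp
  ultimately have "(LEAST i. ?P i) = Suc (LEAST m. ?P (Suc m))" by (rule Least_Suc)
  moreover have "(\<lambda>m. ?P (Suc m)) = (\<lambda>m. s - a \<le> sum_list (take (Suc m) c))"
    using False by (auto simp: fun_eq_iff)
  ultimately have L: "(LEAST i. ?P i) = Suc (LEAST m. s - a \<le> sum_list (take (Suc m) c))" by simp
  show ?thesis using False unfolding pcomp_def Let_def L by simp
qed

lemma card_filter_eq: "card {t \<in> {1..n}. P t} = length (filter P [1..<Suc n])"
proof -
  have "{t \<in> {1..n}. P t} = set (filter P [1..<Suc n])" by (auto simp del: upt_Suc)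
  then show ?thesis using distinct_card[of "filter P [1..<Suc n]"] by (simp del: upt_Suc)
qed

lemma eb_list: "elem_bracket c d e =
   of_nat (length (filter (\<lambda>t. pcomp d t c = e) [1..<Suc (sum_list d)]))
 - of_nat (length (filter (\<lambda>s. pcomp c s d = e) [1..<Suc (sum_list c)]))"
  unfolding elem_bracket_def card_filter_eq ..

lemma "elem_bracket [1,1] [2,3] [3,3] = 2"
  by (simp add: eb_list upt_rec pcomp_Cons)

lemma "elem_bracket [1,2] [3,1] [3,3] = 1"
  by (simp add: eb_list upt_rec pcomp_Cons)
fun comps :: "nat \<Rightarrow> nat list list" where
  "comps 0 = [[]]"
| "comps (Suc n) = concat (map (\<lambda>a. map ((#) a) (comps (Suc n - a))) [1..<Suc (Suc n)])"

lemma comps_complete: "0 \<notin> set c \<Longrightarrow> c \<in> set (comps (sum_list c))"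
proof (induction c)
  case (Cons a c)
  then obtain n where n: "a + sum_list c = Suc n" by (cases "a + sum_list c") auto
  have "a \<in> set [1..<Suc (Suc n)]" using Cons.prems n by auto
  moreover have "Suc n - a = sum_list c" using n by simp
  ultimately have "a # c \<in> (#) a ` set (comps (Suc n - a))" "a \<in> set [1..<Suc (Suc n)]"
    using Cons.IH Cons.prems by (simp_all del: upt_Suc comps.simps)
  then have "a # c \<in> (\<Union>x\<in>set [1..<Suc (Suc n)]. set (map ((#) x) (comps (Suc n - x))))"
    by (intro UN_I[of a]) (simp_all del: upt_Suc comps.simps)
  then show ?case by (simp only: sum_list.Cons n comps.simps(2) set_concat set_map image_image)
qed simp

lemma comps5: "comps 5 = [[1,1,1,1,1],[1,1,1,2],[1,1,2,1],[1,1,3],[1,2,1,1],[1,2,2],[1,3,1],[1,4],[2,1,1,1],[2,1,2],[2,2,1],[2,3],[3,1,1],[3,2],[4,1],[5]]"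
  by code_simp
lemma comps4: "comps 4 = [[1,1,1,1],[1,1,2],[1,2,1],[1,3],[2,1,1],[2,2],[3,1],[4]]"
  by code_simp
lemma comps3: "comps 3 = [[1,1,1],[1,2],[2,1],[3]]"
  by code_simp
lemma comps2: "comps 2 = [[1,1],[2]]"
  by code_simp

lemma Par_comps: "Par n \<subseteq> set (filter (\<lambda>c. 2 \<le> length c) (comps n))"
proof
  fix c assume "c \<in> Par n"
  hence h: "0 \<notin> set c" "sum_list c = n" "2 \<le> length c" by (auto simp: Par_def ParAll_def)
  hence "c \<in> set (comps n)" using comps_complete[of c] by simp
  thus "c \<in> set (filter (\<lambda>c. 2 \<le> length c) (comps n))" using h(3) by simp
qed
lemma P2: "Par 2 \<subseteq> {[1,1]}"
proof -
  have "set (filter (\<lambda>c. 2 \<le> length c) (comps 2)) = {[1,1]}" unfolding comps2 by simp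
  thus ?thesis using Par_comps[of 2] by simp
qed
lemma P3: "Par 3 \<subseteq> {[1,1,1],[1,2],[2,1]}"
proof -
  have "set (filter (\<lambda>c. 2 \<le> length c) (comps 3)) = {[1,1,1],[1,2],[2,1]}" unfolding comps3 by simp
  thus ?thesis using Par_comps[of 3] by simp
qed
lemma P4: "Par 4 \<subseteq> {[1,1,1,1],[1,1,2],[1,2,1],[1,3],[2,1,1],[2,2],[3,1]}"
proof -
  have "set (filter (\<lambda>c. 2 \<le> length c) (comps 4)) = {[1,1,1,1],[1,1,2],[1,2,1],[1,3],[2,1,1],[2,2],[3,1]}" unfolding comps4 by simp
  thus ?thesis using Par_comps[of 4] by simp
qed
lemma P5: "Par 5 \<subseteq> {[1,1,1,1,1],[1,1,1,2],[1,1,2,1],[1,1,3],[1,2,1,1],[1,2,2],[1,3,1],[1,4],[2,1,1,1],[2,1,2],[2,2,1],[2,3],[3,1,1],[3,2],[4,1]}"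
proof -
  have "set (filter (\<lambda>c. 2 \<le> length c) (comps 5)) = {[1,1,1,1,1],[1,1,1,2],[1,1,2,1],[1,1,3],[1,2,1,1],[1,2,2],[1,3,1],[1,4],[2,1,1,1],[2,1,2],[2,2,1],[2,3],[3,1,1],[3,2],[4,1]}" unfolding comps5 by simp
  thus ?thesis using Par_comps[of 5] by simp
qed
lemma lie_br_fin:
  assumes "finite A" "finite B" "{c. u c \<noteq> 0} \<subseteq> A" "{d. v d \<noteq> 0} \<subseteq> B"
  shows "lie_br u v e = (\<Sum>c\<in>A. \<Sum>d\<in>B. u c * v d * elem_bracket c d e)"
proof -
  have inner: "(\<Sum>d\<in>{d. v d \<noteq> 0}. u c * v d * elem_bracket c d e) = (\<Sum>d\<in>B. u c * v d * elem_bracket c d e)" for c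
    by (rule sum.mono_neutral_left) (use assms in auto)
  have "lie_br u v e = (\<Sum>c\<in>{c. u c \<noteq> 0}. \<Sum>d\<in>B. u c * v d * elem_bracket c d e)"
    unfolding lie_br_def inner ..
  also have "\<dots> = (\<Sum>c\<in>A. \<Sum>d\<in>B. u c * v d * elem_bracket c d e)"
    by (rule sum.mono_neutral_left) (use assms in auto)
  finally show ?thesis .
qed

lemma eps2_fin:
  assumes "finite A" "{c. u c \<noteq> 0} \<subseteq> A"
  shows "eps2 u = (\<Sum>c\<in>A. monom (u c) (sum_list c))"
  unfolding eps2_def by (rule sum.mono_neutral_left) (use assms in auto)

theorem proposition7p2:
  shows "\<not> (\<exists>s :: rat poly \<Rightarrow> (nat list \<Rightarrow> rat).
     (\<forall>f\<in>L1. s f \<in> Lambda1_plus) \<and>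
     (\<forall>f\<in>L1. \<forall>g\<in>L1. \<forall>a b :: rat.
        s (smult a f + smult b g) = (\<lambda>c. a * s f c + b * s g c)) \<and>
     (\<forall>f\<in>L1. \<forall>g\<in>L1. s (L1_br f g) = lie_br (s f) (s g)) \<and>
     (\<forall>f\<in>L1. eps2 (s f) = f) \<and>
     (\<forall>m\<ge>2. \<forall>a :: rat. \<forall>c. s (monom a m) c \<noteq> 0 \<longrightarrow> c \<in> Par m))"
proof
  assume "\<exists>s :: rat poly \<Rightarrow> (nat list \<Rightarrow> rat).
     (\<forall>f\<in>L1. s f \<in> Lambda1_plus) \<and>
     (\<forall>f\<in>L1. \<forall>g\<in>L1. \<forall>a b :: rat.
        s (smult a f + smult b g) = (\<lambda>c. a * s f c + b * s g c)) \<and>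
     (\<forall>f\<in>L1. \<forall>g\<in>L1. s (L1_br f g) = lie_br (s f) (s g)) \<and>
     (\<forall>f\<in>L1. eps2 (s f) = f) \<and>
     (\<forall>m\<ge>2. \<forall>a :: rat. \<forall>c. s (monom a m) c \<noteq> 0 \<longrightarrow> c \<in> Par m)"
  then obtain s :: "rat poly \<Rightarrow> (nat list \<Rightarrow> rat)" where
    hP: "\<forall>f\<in>L1. s f \<in> Lambda1_plus" and
    hlin: "\<forall>f\<in>L1. \<forall>g\<in>L1. \<forall>a b :: rat.
        s (smult a f + smult b g) = (\<lambda>c. a * s f c + b * s g c)" and
    hbr: "\<forall>f\<in>L1. \<forall>g\<in>L1. s (L1_br f g) = lie_br (s f) (s g)" and
    heps: "\<forall>f\<in>L1. eps2 (s f) = f" and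
    hsupp: "\<forall>m\<ge>2. \<forall>a :: rat. \<forall>c. s (monom a m) c \<noteq> 0 \<longrightarrow> c \<in> Par m"
    by blast
  have inL1: "monom a m \<in> L1" if "2 \<le> m" for a :: rat and m
    using that by (simp add: L1_def)
  have supp: "{c. s (monom a m) c \<noteq> 0} \<subseteq> Par m" if "2 \<le> m" for a :: rat and m
    using hsupp that by blast
  have b1: "L1_br (monom 1 2) (monom 1 3) = (monom 1 4 :: rat poly)"
    by (simp add: L1_br_def pderiv_monom mult_monom diff_monom)
  have b2: "L1_br (monom 1 2) (monom 1 4) = (monom 2 5 :: rat poly)"
    by (simp add: L1_br_def pderiv_monom mult_monom diff_monom)
  have b3: "L1_br (monom 1 3) (monom 1 4) = (monom 1 6 :: rat poly)"
    by (simp add: L1_br_def pderiv_monom mult_monom diff_monom)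
  have b4: "L1_br (monom 1 2) (monom 2 5) = (monom 6 6 :: rat poly)"
    by (simp add: L1_br_def pderiv_monom mult_monom diff_monom)
  define u2 where "u2 = s (monom 1 2)"
  define u3 where "u3 = s (monom 1 3)"
  define u4 where "u4 = s (monom 1 4)"
  define u5 where "u5 = s (monom 2 5)"
  have S2: "{c. u2 c \<noteq> 0} \<subseteq> {[1,1]}" unfolding u2_def using supp[of 2 1] P2 by auto
  have S3: "{c. u3 c \<noteq> 0} \<subseteq> {[1,1,1],[1,2],[2,1]}" unfolding u3_def using supp[of 3 1] P3 by auto
  have S4: "{c. u4 c \<noteq> 0} \<subseteq> {[1,1,1,1],[1,1,2],[1,2,1],[1,3],[2,1,1],[2,2],[3,1]}" unfolding u4_def using supp[of 4 1] P4 by auto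
  have S5: "{c. u5 c \<noteq> 0} \<subseteq> {[1,1,1,1,1],[1,1,1,2],[1,1,2,1],[1,1,3],[1,2,1,1],[1,2,2],[1,3,1],[1,4],[2,1,1,1],[2,1,2],[2,2,1],[2,3],[3,1,1],[3,2],[4,1]}" unfolding u5_def using supp[of 5 2] P5 by auto
  have br: "s (L1_br f g) = lie_br (s f) (s g)" if "f \<in> L1" "g \<in> L1" for f g
    using hbr that by blast
  have e4: "u4 = lie_br u2 u3" unfolding u2_def u3_def u4_def
    using br[of "monom 1 2" "monom 1 3"] b1 by (simp add: inL1)
  have e5: "u5 = lie_br u2 u4" unfolding u2_def u5_def u4_def
    using br[of "monom 1 2" "monom 1 4"] b2 by (simp add: inL1)
  have e6a: "s (monom 1 6) = lie_br u3 u4" unfolding u3_def u4_def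
    using br[of "monom 1 3" "monom 1 4"] b3 by (simp add: inL1)
  have e6b: "s (monom 6 6) = lie_br u2 u5" unfolding u2_def u5_def
    using br[of "monom 1 2" "monom 2 5"] b4 by (simp add: inL1)
  have lin6: "s (monom 6 6) = (\<lambda>c. 6 * s (monom 1 6) c + 0 * s (monom 1 6) c)"
  proof -
    have "smult 6 (monom 1 6) + smult 0 (monom 1 6) = (monom 6 6 :: rat poly)"
      by (simp add: smult_monom)
    moreover have "s (smult 6 (monom 1 6) + smult 0 (monom 1 6)) = (\<lambda>c. 6 * s (monom 1 6) c + 0 * s (monom 1 6) c)"
      by (rule hlin[rule_format]) (simp_all add: L1_def)
    ultimately show ?thesis by simp
  qed
  have key: "lie_br u2 u5 [3,3] = 6 * lie_br u3 u4 [3,3]"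
  proof -
    have "lie_br u2 u5 = (\<lambda>c. 6 * lie_br u3 u4 c + 0 * lie_br u3 u4 c)"
      using lin6 e6a e6b by simp
    thus ?thesis by (simp add: fun_eq_iff)
  qed
  have eps_2: "eps2 u2 = monom 1 2" unfolding u2_def using heps inL1 by simp
  have eps_3: "eps2 u3 = monom 1 3" unfolding u3_def using heps inL1 by simp
  have w: "u2 [1,1] = 1" using eps_2 eps2_fin[OF _ S2] by (simp add: monom_eq_iff')
  have al: "u3 [1,1,1] + u3 [1,2] + u3 [2,1] = 1"
    using eps_3 eps2_fin[OF _ S3] by (simp add: add_monom monom_eq_iff' numeral_3_eq_3 add.assoc)
  have sym: "u3 [2,1] = u3 [1,2]"
  proof -
    have "iota u3 = u3" using hP inL1[of 3 1] unfolding u3_def Lambda1_plus_def by auto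
    hence "iota u3 [1,2] = u3 [1,2]" by simp
    thus ?thesis by (simp add: iota_def)
  qed
  have L1v: "lie_br u2 u5 [3,3] = 2 * u5 [2,3] + 2 * u5 [3,2]" using w apply (simp add: lie_br_fin[OF _ _ S2 S5]) by (simp add: eb_list upt_rec pcomp_Cons)
  have L2v: "lie_br u3 u4 [3,3] = (u3 [1,1,1] + u3 [1,2] + u3 [2,1]) * (u4 [1,3] + u4 [3,1])" using w apply (simp add: lie_br_fin[OF _ _ S3 S4]) apply (simp add: eb_list upt_rec pcomp_Cons) by (simp add: algebra_simps)
  have L3v: "u5 [2,3] = u4 [1,3] + 2 * u4 [2,2]" using w apply (simp add: e5 lie_br_fin[OF _ _ S2 S4]) by (simp add: eb_list upt_rec pcomp_Cons)
  have L4v: "u5 [3,2] = u4 [3,1] + 2 * u4 [2,2]" using w apply (simp add: e5 lie_br_fin[OF _ _ S2 S4]) by (simp add: eb_list upt_rec pcomp_Cons)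
  have L5v: "u4 [1,3] = u3 [1,2] - u3 [2,1] - u3 [1,1,1]" using w apply (simp add: e4 lie_br_fin[OF _ _ S2 S3]) by (simp add: eb_list upt_rec pcomp_Cons)
  have L6v: "u4 [3,1] = u3 [2,1] - u3 [1,2] - u3 [1,1,1]" using w apply (simp add: e4 lie_br_fin[OF _ _ S2 S3]) by (simp add: eb_list upt_rec pcomp_Cons)
  have L7v: "u4 [2,2] = u3 [1,2] + u3 [2,1]" using w apply (simp add: e4 lie_br_fin[OF _ _ S2 S3]) by (simp add: eb_list upt_rec pcomp_Cons)
  have R: "lie_br u3 u4 [3,3] = -2 * u3 [1,1,1]"
    unfolding L2v L5v L6v using al sym by simp
  have L: "lie_br u2 u5 [3,3] = 16 * u3 [1,2] - 4 * u3 [1,1,1]"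
    unfolding L1v L3v L4v L5v L6v L7v using sym by simp
  show False using key R L al sym by linarith
qed

end
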